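(* Let $\alpha\in\mathbb{N}$. For every $r^{(0)}(n),r^{(1)}(n),r^{(2)}(n)\in\mathbb{C}[n]$ there exists $\bar B\in\mathfrak{D}$ such that for all $n\in\mathbb{N}_0$ $$r^{(0)}(n)\int_{-1}^{n}\big[r^{(1)}(s)L^\alpha_s(x)+r^{(2)}(s)L^\alpha_{s-1}(x)\big]\,d\mu_{\mathrm{d}}(s)=\bar B\,L^\alpha_n(x).$$
   Context: Laguerre polynomials: $L^\alpha_n(x)=\frac{\Gamma(\alpha+n+1)}{\Gamma(\alpha+1)\Gamma(n+1)}\,{}_1F_1(-n;\alpha+1;x)$ for $n\in\mathbb{N}_0$, with ${}_1F_1(a;c;x)=\sum_{j\ge0}\frac{(a)_jx^j}{(c)_jj!}$, and $L^\alpha_{-j}(x)=0$ for $j\in\mathbb{N}$. Discrete integral: $\int_m^n f(s)\,d\mu_{\mathrm{d}}(s)=\sum_{s=m+1}^n f(s)$ if $n>m$ (and $0$ if $n=m$). $\mathfrak{D}$ is the associative algebra of differential operators generated by $\frac{d}{dx}$ and $x\frac{d^2}{dx^2}-x\frac{d}{dx}$. *)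

theory Defs
  imports "HOL-Analysis.Analysis" "HOL-Computational_Algebra.Polynomial"
begin

text \<open>Confluent hypergeometric 1F1(a;c;x) as a polynomial, truncated at degree N
  (for a = -n with N = n the series terminates, since the Pochhammer symbol (-n)_j vanishes for j > n).\<close>
definition hyp1F1_trunc :: "complex \<Rightarrow> complex \<Rightarrow> nat \<Rightarrow> complex poly" where
  "hyp1F1_trunc a c N =
     (\<Sum>j\<le>N. monom (pochhammer a j / (pochhammer c j * fact j)) j)"

definition laguerre :: "nat \<Rightarrow> int \<Rightarrow> complex poly" where
  "laguerre \<alpha> s =
     (if s < 0 then 0
      else smult (Gamma (of_nat \<alpha> + of_int s + 1) /
                    (Gamma (of_nat \<alpha> + 1) * Gamma (of_int s + 1)))
                 (hyp1F1_trunc (- of_int s) (of_nat \<alpha> + 1) (nat s)))"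

definition opD :: "complex poly \<Rightarrow> complex poly" where
  "opD p = pderiv p"

definition opE :: "complex poly \<Rightarrow> complex poly" where
  "opE p = [:0, 1:] * pderiv (pderiv p) - [:0, 1:] * pderiv p"

inductive_set frakD :: "(complex poly \<Rightarrow> complex poly) set" where
  frakD_id: "id \<in> frakD"
| frakD_D: "opD \<in> frakD"
| frakD_E: "opE \<in> frakD"
| frakD_smult: "f \<in> frakD \<Longrightarrow> (\<lambda>p. smult c (f p)) \<in> frakD"
| frakD_add: "f \<in> frakD \<Longrightarrow> g \<in> frakD \<Longrightarrow> (\<lambda>p. f p + g p) \<in> frakD"
| frakD_comp: "f \<in> frakD \<Longrightarrow> g \<in> frakD \<Longrightarrow> f \<circ> g \<in> frakD"

end

theory Submission
  imports Defs
begin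

definition KK :: "nat \<Rightarrow> nat \<Rightarrow> complex" where
  "KK \<alpha> n = fact (\<alpha> + n) / (fact \<alpha> * fact n)"
definition TT :: "nat \<Rightarrow> nat \<Rightarrow> nat \<Rightarrow> complex" where
  "TT \<alpha> n j = pochhammer (- of_nat n) j / (pochhammer (of_nat \<alpha> + 1) j * fact j)"

lemma coeff_hyp: "coeff (hyp1F1_trunc a c N) j = (if j \<le> N then pochhammer a j / (pochhammer c j * fact j) else 0)"
  unfolding hyp1F1_trunc_def by (simp add: coeff_sum coeff_monom)

lemma coeff_lag: "coeff (laguerre \<alpha> (int n)) j = KK \<alpha> n * TT \<alpha> n j"
proof -
  have g1: "Gamma (of_nat \<alpha> + of_nat n + 1 :: complex) = fact (\<alpha> + n)"
    using Gamma_fact[of "\<alpha>+n", where 'a=complex] by (simp add: add.commute add.left_commute)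
  have g2: "Gamma (of_nat \<alpha> + 1 :: complex) = fact \<alpha>"
    using Gamma_fact[of "\<alpha>", where 'a=complex] by (simp add: add.commute)
  have g3: "Gamma (of_nat n + 1 :: complex) = fact n"
    using Gamma_fact[of "n", where 'a=complex] by (simp add: add.commute)
  have z: "j > n \<Longrightarrow> pochhammer (- of_nat n :: complex) j = 0"
    by (subst pochhammer_eq_0_iff) auto
  show ?thesis
    unfolding laguerre_def KK_def TT_def using z
    by (auto simp add: g1 g2 g3 coeff_hyp)
qed

lemma nz: "(of_nat a + 1 + of_nat k :: complex) \<noteq> 0"
proof -
  have h: "(of_nat a + 1 + of_nat k :: complex) = of_nat (Suc (a+k))" by simp
  show ?thesis unfolding h by (simp only: of_nat_eq_0_iff)
qed

lemma TT_Suc: "TT \<alpha> n (Suc j) = TT \<alpha> n j * (of_nat j - of_nat n) / ((of_nat \<alpha> + 1 + of_nat j) * (of_nat j + 1))"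
proof -
  have "pochhammer (of_nat \<alpha> + 1 :: complex) j \<noteq> 0"
    by (subst pochhammer_eq_0_iff) (auto simp: eq_neg_iff_add_eq_0 nz)
  moreover have "(of_nat \<alpha> + 1 + of_nat j :: complex) \<noteq> 0"
    by (rule nz)
  ultimately show ?thesis unfolding TT_def
    by (simp add: pochhammer_Suc field_simps)
qed

lemma TT_Suc2: "TT \<alpha> (Suc n) (Suc j) = TT \<alpha> n j * (- of_nat n - 1) / ((of_nat \<alpha> + 1 + of_nat j) * (of_nat j + 1))"
proof -
  have "pochhammer (of_nat \<alpha> + 1 :: complex) j \<noteq> 0"
    by (subst pochhammer_eq_0_iff) (auto simp: eq_neg_iff_add_eq_0 nz)
  moreover have "(of_nat \<alpha> + 1 + of_nat j :: complex) \<noteq> 0"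
    by (rule nz)
  moreover have p1: "pochhammer (- of_nat (Suc n) :: complex) (Suc j) = (- of_nat n - 1) * pochhammer (- of_nat n) j"
    by (subst pochhammer_rec) (simp add: algebra_simps)
  moreover have p2: "pochhammer (of_nat \<alpha> + 1 :: complex) (Suc j) = pochhammer (of_nat \<alpha> + 1) j * (of_nat \<alpha> + 1 + of_nat j)"
    by (simp add: pochhammer_Suc)
  ultimately show ?thesis unfolding TT_def
    by (simp only: p1 p2 fact_Suc) (simp add: field_simps)
qed

lemma KK_Suc: "KK \<alpha> (Suc n) = KK \<alpha> n * (of_nat \<alpha> + of_nat n + 1) / (of_nat n + 1)"
  unfolding KK_def by (simp add: field_simps)

lemma n1nz: "(of_nat j + 1 :: complex) \<noteq> 0"
  by (metis of_nat_Suc of_nat_eq_0_iff nat.distinct(1) add.commute)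

lemma TT_Suc_m: "TT \<alpha> n (Suc j) * ((of_nat \<alpha> + 1 + of_nat j) * (of_nat j + 1)) = TT \<alpha> n j * (of_nat j - of_nat n)"
  unfolding TT_Suc using nz[of \<alpha> j] n1nz[of j] by simp

lemma TT_Suc2_m: "TT \<alpha> (Suc n) (Suc j) * ((of_nat \<alpha> + 1 + of_nat j) * (of_nat j + 1)) = TT \<alpha> n j * (- of_nat n - 1)"
  unfolding TT_Suc2 using nz[of \<alpha> j] n1nz[of j] by simp

lemma KK_Suc_m: "KK \<alpha> (Suc n) * (of_nat n + 1) = KK \<alpha> n * (of_nat \<alpha> + of_nat n + 1)"
  unfolding KK_Suc using n1nz[of n] by simp

lemma lagA: "pderiv (laguerre \<alpha> (int (Suc n))) = pderiv (laguerre \<alpha> (int n)) - laguerre \<alpha> (int n)"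
proof (rule poly_eqI)
  fix j
  have "(of_nat j + 1) * (KK \<alpha> (Suc n) * TT \<alpha> (Suc n) (Suc j)) = (of_nat j + 1) * (KK \<alpha> n * TT \<alpha> n (Suc j)) - KK \<alpha> n * TT \<alpha> n j"
    using nz[of \<alpha> j] n1nz[of n] KK_Suc_m[of \<alpha> n] TT_Suc_m[of \<alpha> n j] TT_Suc2_m[of \<alpha> n j] by algebra
  then show "coeff (pderiv (laguerre \<alpha> (int (Suc n)))) j = coeff (pderiv (laguerre \<alpha> (int n)) - laguerre \<alpha> (int n)) j"
    unfolding coeff_pderiv coeff_diff coeff_lag by (simp add: algebra_simps)
qed

lemma lag0: "pderiv (laguerre \<alpha> 0) = 0"
proof (rule poly_eqI)
  fix j
  show "coeff (pderiv (laguerre \<alpha> 0)) j = coeff 0 j"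
    using coeff_lag[of \<alpha> 0 "Suc j"] by (simp add: coeff_pderiv TT_def pochhammer_0_left)
qed

definition opN :: "nat \<Rightarrow> complex poly \<Rightarrow> complex poly" where
  "opN \<alpha> p = smult (-1) (opE p) + smult (- (of_nat \<alpha> + 1)) (opD p)"

lemma X_mult: "[:0, 1:] * (q::complex poly) = pCons 0 q" by simp

lemma lagE: "opN \<alpha> (laguerre \<alpha> (int n)) = smult (of_nat n) (laguerre \<alpha> (int n))"
proof (rule poly_eqI)
  fix j
  show "coeff (opN \<alpha> (laguerre \<alpha> (int n))) j = coeff (smult (of_nat n) (laguerre \<alpha> (int n))) j"
  proof (cases j)
    case 0
    have h: "TT \<alpha> n (Suc 0) * ((of_nat \<alpha> + 1 + of_nat 0) * (of_nat 0 + 1)) = TT \<alpha> n 0 * (of_nat 0 - of_nat n)"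
      by (rule TT_Suc_m)
    have h2: "(- of_nat \<alpha> - 1) * TT \<alpha> n (Suc 0) = of_nat n * TT \<alpha> n 0"
      using h by simp algebra
    then show ?thesis using 0 unfolding opN_def opE_def opD_def X_mult
      by (simp add: coeff_pderiv coeff_lag h2)
  next
    case (Suc i)
    have h: "TT \<alpha> n (Suc (Suc i)) * ((of_nat \<alpha> + 1 + of_nat (Suc i)) * (of_nat (Suc i) + 1)) = TT \<alpha> n (Suc i) * (of_nat (Suc i) - of_nat n)"
      by (rule TT_Suc_m)
    have "- ((of_nat (Suc i) * (of_nat (Suc (Suc i)) * (KK \<alpha> n * TT \<alpha> n (Suc (Suc i))))) - of_nat (Suc i) * (KK \<alpha> n * TT \<alpha> n (Suc i)))
       - (of_nat \<alpha> + 1) * (of_nat (Suc (Suc i)) * (KK \<alpha> n * TT \<alpha> n (Suc (Suc i)))) = of_nat n * (KK \<alpha> n * TT \<alpha> n (Suc i))"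
      using h unfolding of_nat_Suc by algebra
    then show ?thesis using Suc unfolding opN_def opE_def opD_def X_mult
      by (simp add: coeff_pderiv coeff_lag del: of_nat_Suc) (simp add: algebra_simps del: of_nat_Suc)
  qed
qed

lemma frakD_linear:
  assumes "f \<in> frakD"
  shows "(\<forall>c p. f (smult c p) = smult c (f p)) \<and> (\<forall>p q. f (p+q) = f p + f q)"
  using assms
proof induction
  case frakD_id then show ?case by simp
next
  case frakD_D then show ?case by (simp add: opD_def pderiv_add pderiv_smult)
next
  case frakD_E then show ?case by (simp add: opE_def pderiv_add pderiv_smult algebra_simps smult_diff_right)
next
  case (frakD_smult f c) then show ?case by (simp add: smult_add_right mult.commute)
next
  case (frakD_add f g) then show ?case by (simp add: algebra_simps smult_add_right)
next
  case (frakD_comp f g) then show ?case by simp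
qed

lemma frakD_smult_lin: "f \<in> frakD \<Longrightarrow> f (smult c p) = smult c (f p)"
  using frakD_linear by blast
lemma frakD_add_lin: "f \<in> frakD \<Longrightarrow> f (p + q) = f p + f q"
  using frakD_linear by blast
lemma frakD_zero: "f \<in> frakD \<Longrightarrow> f 0 = 0"
  using frakD_smult_lin[of f 0 0] by simp
lemma frakD_sum: "f \<in> frakD \<Longrightarrow> f (sum g A) = (\<Sum>x\<in>A. f (g x))"
proof (induction A rule: infinite_finite_induct)
  case (infinite A) then show ?case by (simp add: frakD_zero)
next
  case empty then show ?case by (simp add: frakD_zero)
next
  case (insert x F) then show ?case by (simp add: frakD_add_lin)
qed
lemma frakD_neg: "f \<in> frakD \<Longrightarrow> f (- p) = - f p"
  using frakD_smult_lin[of f "-1" p] by simp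
lemma frakD_diff: "f \<in> frakD \<Longrightarrow> f (p - q) = f p - f q"
  using frakD_add_lin[of f p "-q"] frakD_neg[of f q] by simp

lemma opN_frakD: "opN \<alpha> \<in> frakD"
proof -
  have "(\<lambda>p. (\<lambda>p. smult (-1) (opE p)) p + (\<lambda>p. smult (- (of_nat \<alpha> + 1)) (opD p)) p) \<in> frakD"
    by (intro frakD_add frakD_smult frakD_E frakD_D)
  then show ?thesis by (simp add: opN_def[abs_def])
qed

primrec opH :: "nat \<Rightarrow> complex list \<Rightarrow> complex poly \<Rightarrow> complex poly" where
  "opH \<alpha> [] = (\<lambda>p. 0)"
| "opH \<alpha> (a # as) = (\<lambda>p. smult a p + opN \<alpha> (opH \<alpha> as p))"

lemma opH_frakD: "opH \<alpha> cs \<in> frakD"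
proof (induction cs)
  case Nil
  have "(\<lambda>p. smult 0 (id p)) \<in> frakD" by (intro frakD_smult frakD_id)
  then show ?case by simp
next
  case (Cons a as)
  have "(\<lambda>p. (\<lambda>p. smult a (id p)) p + (opN \<alpha> \<circ> opH \<alpha> as) p) \<in> frakD"
    by (intro frakD_add frakD_smult frakD_id frakD_comp opN_frakD Cons)
  then show ?case by simp
qed

lemma lagN: "opN \<alpha> (laguerre \<alpha> s) = smult (of_int s) (laguerre \<alpha> s)"
proof (cases "s < 0")
  case True
  then show ?thesis using frakD_zero[OF opN_frakD] by (simp add: laguerre_def)
next
  case False
  then obtain n where "s = int n" by (metis nonneg_eq_int not_less)
  then show ?thesis using lagE[of \<alpha> n] by simp
qed

lemma opH_eig: "opH \<alpha> cs (laguerre \<alpha> s) = smult (poly (Poly cs) (of_int s)) (laguerre \<alpha> s)"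
proof (induction cs)
  case Nil then show ?case by simp
next
  case (Cons a as)
  then show ?case by (simp add: frakD_smult_lin[OF opN_frakD] lagN smult_add_left mult.commute)
qed

lemma sumS1: "(\<Sum>s\<in>{0..int n}. laguerre \<alpha> s) = laguerre \<alpha> (int n) - pderiv (laguerre \<alpha> (int n))"
proof (induction n)
  case 0 then show ?case by (simp add: lag0)
next
  case (Suc n)
  have e: "{0..int (Suc n)} = insert (1 + int n) {0..int n}"
    using atLeastAtMostPlus1_int_conv[of 0 "int n"] by simp
  show ?case unfolding e using Suc lagA[of \<alpha> n]
    by (simp add: add.commute)
qed

lemma sumS2: "(\<Sum>s\<in>{0..int n}. laguerre \<alpha> (s - 1)) = - pderiv (laguerre \<alpha> (int n))"
proof (induction n)
  case 0
  have "laguerre \<alpha> (-1) = 0" by (simp add: laguerre_def)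
  then show ?case by (simp add: lag0)
next
  case (Suc n)
  have e: "{0..int (Suc n)} = insert (1 + int n) {0..int n}"
    using atLeastAtMostPlus1_int_conv[of 0 "int n"] by simp
  show ?case unfolding e using Suc lagA[of \<alpha> n]
    by simp
qed


theorem lemma4p4:
  fixes \<alpha> :: nat and r0 r1 r2 :: "complex poly"
  assumes "\<alpha> \<ge> 1"
  shows "\<exists>B\<in>frakD. \<forall>n::nat.
           smult (poly r0 (of_nat n))
             (\<Sum>s\<in>{0..int n}. smult (poly r1 (of_int s)) (laguerre \<alpha> s)
                               + smult (poly r2 (of_int s)) (laguerre \<alpha> (s - 1)))
           = B (laguerre \<alpha> (int n))"
proof -
  define c0 where "c0 = coeffs r0"
  define c1 where "c1 = coeffs r1"
  define q where "q = pcompose r2 [:1, 1:]"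
  define c2 where "c2 = coeffs q"
  define M1 where "M1 = (\<lambda>p::complex poly. id p + smult (-1) (opD p))"
  define G where "G = (\<lambda>p. (opH \<alpha> c1 \<circ> M1) p + smult (-1) ((opH \<alpha> c2 \<circ> opD) p))"
  have M1D: "M1 \<in> frakD" unfolding M1_def by (intro frakD_add frakD_smult frakD_id frakD_D)
  have GD: "G \<in> frakD" unfolding G_def
    by (intro frakD_add frakD_smult frakD_comp opH_frakD M1D frakD_D)
  have BD: "G \<circ> opH \<alpha> c0 \<in> frakD" by (intro frakD_comp GD opH_frakD)
  have pq: "poly r2 (of_int s) = poly (Poly c2) (of_int (s - 1))" for s
    unfolding c2_def q_def by (simp add: poly_pcompose)
  have "smult (poly r0 (of_nat n))
             (\<Sum>s\<in>{0..int n}. smult (poly r1 (of_int s)) (laguerre \<alpha> s)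
                               + smult (poly r2 (of_int s)) (laguerre \<alpha> (s - 1)))
           = (G \<circ> opH \<alpha> c0) (laguerre \<alpha> (int n))" for n
  proof -
    have "(G \<circ> opH \<alpha> c0) (laguerre \<alpha> (int n)) = smult (poly r0 (of_nat n)) (G (laguerre \<alpha> (int n)))"
      using opH_eig[of \<alpha> c0 "int n"] frakD_smult_lin[OF GD] by (simp add: c0_def)
    moreover have "G (laguerre \<alpha> (int n)) =
        (\<Sum>s\<in>{0..int n}. smult (poly r1 (of_int s)) (laguerre \<alpha> s)
                               + smult (poly r2 (of_int s)) (laguerre \<alpha> (s - 1)))"
    proof -
      have "G (laguerre \<alpha> (int n)) = opH \<alpha> c1 (\<Sum>s\<in>{0..int n}. laguerre \<alpha> s)
              + opH \<alpha> c2 (\<Sum>s\<in>{0..int n}. laguerre \<alpha> (s - 1))"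
        unfolding sumS1 sumS2 G_def M1_def
        using frakD_smult_lin[OF opH_frakD, of \<alpha> c2 "-1"]
        by (simp add: opD_def frakD_neg[OF opH_frakD] frakD_diff[OF opH_frakD])
      also have "\<dots> = (\<Sum>s\<in>{0..int n}. smult (poly r1 (of_int s)) (laguerre \<alpha> s))
          + (\<Sum>s\<in>{0..int n}. smult (poly r2 (of_int s)) (laguerre \<alpha> (s - 1)))"
        unfolding frakD_sum[OF opH_frakD] opH_eig pq by (simp add: c1_def)
      finally show ?thesis by (simp add: sum.distrib)
    qed
    ultimately show ?thesis by simp
  qed
  then show ?thesis using BD by blast
qed

end
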